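(* Let $p$ be a prime. (1) For natural numbers $m,n$: there exist integers $r,s\ge1$ and $\ell\in\mathbb{Z}$ with $m=p^r$, $n=p^s$ and $n-m=p^\ell(m-1)$ if and only if $m=p^r$ for some $r\geq1$ and $n=m^2$. (2) For integers $m,n$: there exist integers $r,s\geq1$, $\ell\in\mathbb{Z}$ and signs $\rho,\sigma,\lambda\in\{-1,1\}$ with $m=\rho p^r$, $n=\sigma p^s$ and $n-m=\lambda p^\ell(m-1)$ if and only if $m,n\in\{\pm p^h: h\geq1\}$ and either $n=m^2$, or $p=2$ and $(m,n)\in\{(-2,-8),(2,-2),(4,-2),(4,-8)\}$, or $p=3$ and $(m,n)=(3,-3)$. Equivalently, writing $\bar\theta(m,n)$ for the formula $P_0(m)\wedge P_0(n)\wedge R(m-1,n-m)$: in $\mathfrak{N}_p$ (with $P_0(n)$ being $R(1,n)\wedge n\geq 2$) it defines $\{(p^h,p^{2h}):h\geq1\}$, and in $\mathfrak{D}_p$ (with $P_0(n)$ being $R(1,n)\wedge T(n)$) it defines the set described in (2).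
   Context: For a prime $p$, $x\mid_p y$ (on $\mathbb{Z}$ or $\mathbb{N}$) means $y=\pm xp^s$ for some $s\in\mathbb{Z}$. $\mathfrak{N}_p=(\mathbb{N};0,1,+,\mid_p)$ with $R$ interpreted as $\mid_p$; $\mathfrak{D}_p=(\mathbb{Z};0,1,+,\mid,\mid_p,\mathbb{Z}\smallsetminus\{-1,0,1\})$ with $R$ interpreted as $\mid_p$ and $T$ as $\mathbb{Z}\smallsetminus\{-1,0,1\}$. The expressions $m-1$, $n-m$ are read as integer subtraction. *)

theory Defs
  imports Complex_Main "HOL-Computational_Algebra.Primes"
begin

end

theory Submission imports Defs begin

lemma pow_cancel:
  fixes P X Y :: int
  assumes "P \<noteq> 0" "\<not> P dvd X" "\<not> P dvd Y" "P^a * X = P^b * Y"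
  shows "a = b \<and> X = Y"
proof (cases a b rule: linorder_cases)
  case less
  then have "P^b = P^a * P^(b-a)" by (simp add: power_add[symmetric])
  with assms(4) have "P^a * X = P^a * (P^(b-a) * Y)" by (simp add: mult.assoc)
  then have "X = P^(b-a) * Y" using assms(1) by simp
  moreover have "P dvd P^(b-a)" using less by (simp add: dvd_power)
  ultimately have "P dvd X" by simp
  with assms(2) show ?thesis by simp
next
  case greater
  then have "P^a = P^b * P^(a-b)" by (simp add: power_add[symmetric])
  with assms(4) have "P^b * (P^(a-b) * X) = P^b * Y" by (simp add: mult.assoc)
  then have "Y = P^(a-b) * X" using assms(1) by simp
  moreover have "P dvd P^(a-b)" using greater by (simp add: dvd_power)
  ultimately have "P dvd Y" by simp
  with assms(3) show ?thesis by simp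
next
  case equal
  with assms show ?thesis by simp
qed

lemma unit_dvd:
  fixes P lam Y :: int
  assumes "lam \<in> {-1,1}" "P dvd lam * Y" shows "P dvd Y"
  using assms by auto

lemma powi_reduce:
  fixes p :: nat and n m lam :: int and l :: int
  assumes "prime p" "lam \<in> {-1,1}" "int p dvd (n - m)" "\<not> int p dvd (m - 1)"
    "real_of_int (n - m) = real_of_int lam * real p powi l * real_of_int (m - 1)"
  shows "\<exists>k::nat. n - m = lam * int p ^ k * (m - 1)"
proof (cases "l \<ge> 0")
  case True
  then obtain k where "l = int k" by (metis nonneg_eq_int)
  have "real_of_int (lam * int p ^ k * (m - 1)) = real_of_int lam * real p ^ k * real_of_int (m - 1)" by simp
  with assms(5) \<open>l = int k\<close> have "real_of_int (n - m) = real_of_int (lam * int p ^ k * (m - 1))" by simp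
  then show ?thesis by (metis of_int_eq_iff)
next
  case False
  define k where "k = nat (- l)"
  have k: "l = - int k" "k \<ge> 1" using False unfolding k_def by auto
  have p0: "real p \<noteq> 0" using assms(1) by auto
  from assms(5) k have "real_of_int (n - m) = real_of_int lam * inverse (real p ^ k) * real_of_int (m - 1)"
    by (simp add: power_int_minus)
  then have "real_of_int (n - m) * real p ^ k = real_of_int lam * real_of_int (m - 1)"
    using p0 by (simp add: field_simps)
  then have "real_of_int ((n - m) * int p ^ k) = real_of_int (lam * (m - 1))" by simp
  then have e: "(n - m) * int p ^ k = lam * (m - 1)" by (metis of_int_eq_iff)
  have "int p dvd (n - m) * int p ^ k" using assms(3) by simp
  with e have "int p dvd lam * (m - 1)" by simp
  with assms(2,4) unit_dvd show ?thesis by blast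
qed

lemma pow_ge: fixes P :: int assumes "P \<ge> 2" "t \<ge> 1" shows "P^t \<ge> P"
proof -
  have "P^1 \<le> P^t" using assms by (intro power_increasing) auto
  then show ?thesis by simp
qed

lemma pow_eq1: fixes P :: int assumes "P \<ge> 2" "P^t = P" shows "t = 1"
  using assms power_inject_exp[of P t 1] by simp

lemma core:
  fixes P m n rho sigma lam :: int and r s k :: nat
  assumes P2: "P \<ge> 2" and r1: "r \<ge> 1" and s1: "s \<ge> 1"
    and rho: "rho \<in> {-1,1}" and sig: "sigma \<in> {-1,1}" and lam: "lam \<in> {-1,1}"
    and m: "m = rho * P^r" and n: "n = sigma * P^s"
    and e: "n - m = lam * P^k * (m - 1)"
  shows "n = m^2 \<or> (P = 2 \<and> (m,n) \<in> {(-2, -8), (2, -2), (4, -2), (4, -8)}) \<or> (P = 3 \<and> (m,n) = (3,-3))"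
proof -
  have P0: "P \<noteq> 0" using P2 by simp
  have ndvd1: "\<not> P dvd 1" using P2 by auto
  have ndvdrho: "\<not> P dvd rho" using rho ndvd1 by auto
  have Pm: "P dvd m" using m r1 by (simp add: dvd_power)
  have nm1: "\<not> P dvd (m - 1)"
  proof
    assume "P dvd (m - 1)"
    with Pm have "P dvd m - (m - 1)" by (rule dvd_diff)
    with ndvd1 show False by simp
  qed
  have nY: "\<not> P dvd lam * (m - 1)" using nm1 lam unit_dvd by blast
  have Pr: "P^r \<ge> P" using pow_ge P2 r1 by blast
  have Ps: "P^s \<ge> P" using pow_ge P2 s1 by blast
  have e2: "n - m = P^k * (lam * (m - 1))" using e by (simp add: algebra_simps)
  show ?thesis
  proof (cases r s rule: linorder_cases)
    case less
    define t where "t = s - r"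
    have t1: "t \<ge> 1" and st: "s = r + t" using less unfolding t_def by auto
    have Pt: "P^t \<ge> P" using pow_ge P2 t1 by blast
    have nP: "n = sigma * P^r * P^t" using n st by (simp add: power_add)
    have "n - m = P^r * (sigma * P^t - rho)" using nP m by (simp add: algebra_simps)
    have nX: "\<not> P dvd (sigma * P^t - rho)"
    proof
      assume "P dvd (sigma * P^t - rho)"
      moreover have "P dvd sigma * P^t" using t1 by (simp add: dvd_power)
      ultimately have "P dvd sigma * P^t - (sigma * P^t - rho)" by (metis dvd_diff)
      with ndvdrho show False by simp
    qed
    have "P^r * (sigma * P^t - rho) = P^k * (lam * (m - 1))"
      using \<open>n - m = P^r * (sigma * P^t - rho)\<close> e2 by simp
    from pow_cancel[OF P0 nX nY this] have X: "sigma * P^t - rho = lam * (rho * P^r - 1)"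
      using m by simp
    show ?thesis
    proof (cases "lam = rho")
      case True
      with X rho have "sigma * P^t = P^r" by auto
      moreover have s1': "sigma = 1" using calculation sig Pr Pt P2 by auto
      ultimately have "P^t = P^r" by simp
      then have "t = r" using power_inject_exp[of P t r] P2 by simp
      then have "n = m^2" using nP m rho s1' by (auto simp: power2_eq_square)
      then show ?thesis by simp
    next
      case False
      then have lr: "lam = - rho" using lam rho by auto
      with X rho have Y: "sigma * P^t + P^r = 2 * rho" by auto
      have sm: "sigma = -1" using Y sig rho Pr Pt P2 by auto
      with Y have Z: "P^r - P^t = 2 * rho" by simp
      have "P dvd P^r - P^t" using r1 t1 by (simp add: dvd_power)
      with Z have "P dvd 2 * rho" by simp
      then have "P dvd 2" using rho by auto
      then have "P \<le> 2" by (simp add: zdvd_imp_le)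
      then have P2': "P = 2" using P2 by simp
      show ?thesis
      proof (cases "r = 1")
        case True
        with Z P2' have "2 - 2^t = 2 * rho" by simp
        moreover have "(2::int)^t \<ge> 2" using Pt P2' by simp
        ultimately have "rho = -1" "(2::int)^t = 2^2" using rho by auto
        then have "t = 2" using power_inject_exp[of "2::int" t 2] by simp
        then show ?thesis using m nP True P2' sm \<open>rho = -1\<close> by simp
      next
        case False
        then have r2: "r \<ge> 2" using r1 by simp
        show ?thesis
        proof (cases "t = 1")
          case True
          with Z P2' have "2^r - 2 = 2 * rho" by simp
          moreover have "(2::int)^r \<ge> 2" using Pr P2' by simp
          ultimately have "rho = 1" "(2::int)^r = 2^2" using rho by auto
          then have "r = 2" using power_inject_exp[of "2::int" r 2] by simp
          then show ?thesis using m nP True P2' sm \<open>rho = 1\<close> by simp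
        next
          case False
          then have t2: "t \<ge> 2" using t1 by simp
          have "(4::int) dvd 2^r" using r2 by (metis le_imp_power_dvd power2_eq_square numeral_Bit0 mult_2 numeral_One one_add_one)
          moreover have "(4::int) dvd 2^t" using t2 by (metis le_imp_power_dvd power2_eq_square numeral_Bit0 mult_2 numeral_One one_add_one)
          ultimately have "(4::int) dvd 2^r - 2^t" by (rule dvd_diff)
          with Z P2' have "(4::int) dvd 2 * rho" by simp
          with rho show ?thesis by auto
        qed
      qed
    qed
  next
    case greater
    define t where "t = r - s"
    have t1: "t \<ge> 1" and st: "r = s + t" using greater unfolding t_def by auto
    have Pt: "P^t \<ge> P" using pow_ge P2 t1 by blast
    define A where "A = P^s"
    define B where "B = P^t"
    have A2: "A \<ge> 2" and B2: "B \<ge> 2" using Ps Pt P2 unfolding A_def B_def by auto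
    have mP: "m = rho * A * B" using m st unfolding A_def B_def by (simp add: power_add)
    have "n - m = P^s * (sigma - rho * P^t)" using mP n unfolding A_def B_def by (simp add: algebra_simps)
    have nX: "\<not> P dvd (sigma - rho * P^t)"
    proof
      assume "P dvd (sigma - rho * P^t)"
      moreover have "P dvd rho * P^t" using t1 by (simp add: dvd_power)
      ultimately have "P dvd (sigma - rho * P^t) + rho * P^t" by (rule dvd_add)
      with sig ndvd1 show False by auto
    qed
    have "P^s * (sigma - rho * P^t) = P^k * (lam * (m - 1))"
      using \<open>n - m = P^s * (sigma - rho * P^t)\<close> e2 by simp
    from pow_cancel[OF P0 nX nY this] have X: "sigma - rho * B = lam * (rho * A * B - 1)"
      using mP unfolding B_def by simp
    have hAB: "A * B \<ge> 2 * B" using A2 B2 by simp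
    have "rho = 1 \<and> lam = -1 \<and> sigma = -1 \<and> A = 2 \<and> B = 2"
    proof -
      have "rho = 1 \<or> rho = -1" "lam = 1 \<or> lam = -1" "sigma = 1 \<or> sigma = -1"
        using rho lam sig by auto
      moreover obtain C where C: "C = A * B" by simp
      moreover have "sigma - rho * B = lam * (rho * C - 1)" using X C by (simp add: mult.assoc)
      moreover have "C \<ge> 2 * B" using hAB C by simp
      ultimately have "rho = 1 \<and> lam = -1"
        using B2 by (elim disjE) auto
      with X have "A * B - B = 1 - sigma" by simp
      then have "B \<le> 2" "A * B - B \<le> 2" using hAB sig by auto
      then have "B = 2" using B2 by simp
      with \<open>A * B - B \<le> 2\<close> A2 have "A = 2" by simp
      with \<open>A * B - B = 1 - sigma\<close> \<open>B = 2\<close> have "sigma = -1" by simp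
      with \<open>A = 2\<close> \<open>B = 2\<close> \<open>rho = 1 \<and> lam = -1\<close> show ?thesis by simp
    qed
    then have ab: "rho = 1" "sigma = -1" "P^s = 2" "P^t = 2" unfolding A_def B_def by auto
    have "P = 2" using Ps ab P2 by simp
    then have "s = 1" "t = 1" using ab pow_eq1[of P s] pow_eq1[of P t] by auto
    then show ?thesis using mP n ab \<open>P = 2\<close> unfolding A_def B_def by simp
  next
    case equal
    have "sigma \<noteq> rho"
    proof
      assume "sigma = rho"
      then have "n - m = 0" using m n equal by simp
      with e P0 have "m - 1 = 0" using lam by auto
      with nm1 show False by simp
    qed
    then have sr: "sigma = - rho" using sig rho by auto
    have nm: "n - m = P^r * (- 2 * rho)" using m n sr equal by (simp add: algebra_simps)
    show ?thesis
    proof (cases "P = 2")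
      case True
      have "P^r * (- 2 * rho) = P^(r+1) * (- rho)" using True by (simp add: algebra_simps)
      then have E: "P^(r+1) * (- rho) = P^k * (lam * (m - 1))" using nm e2 by simp
      have nr: "\<not> P dvd - rho" using ndvdrho by simp
      have X: "- rho = lam * (rho * 2^r - 1)" using pow_cancel[OF P0 nr nY E] m True by simp
      have p2: "(2::int)^r \<ge> 2" using Pr True by simp
      have "rho = 1 \<and> (2::int)^r = 2"
        using X rho lam p2 by auto
      then have "r = 1" using pow_eq1[of 2 r] by simp
      then show ?thesis using m n sr equal True \<open>rho = 1 \<and> (2::int)^r = 2\<close> by simp
    next
      case False
      have "\<not> P dvd (- 2 * rho)"
      proof
        assume "P dvd (- 2 * rho)"
        then have "P dvd 2" using rho by auto
        then have "P \<le> 2" by (simp add: zdvd_imp_le)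
        with P2 False show False by simp
      qed
      note n2 = this
      have E: "P^r * (- 2 * rho) = P^k * (lam * (m - 1))" using nm e2 by simp
      have X: "- 2 * rho = lam * (rho * P^r - 1)" using pow_cancel[OF P0 n2 nY E] m by simp
      have "rho = 1 \<and> P^r = 3" using X rho lam Pr P2 by auto
      then have "P \<le> 3" using Pr by simp
      with P2 False have P3: "P = 3" by simp
      with \<open>rho = 1 \<and> P^r = 3\<close> have "r = 1" using pow_eq1[of P r] by simp
      then show ?thesis using m n sr equal P3 \<open>rho = 1 \<and> P^r = 3\<close> by simp
    qed
  qed
qed

lemma fwd:
  fixes p :: nat and m n rho sigma lam l :: int and r s :: nat
  assumes p: "prime p" and h: "r \<ge> 1" "s \<ge> 1" "rho \<in> {-1, 1}" "sigma \<in> {-1, 1}" "lam \<in> {-1, 1}"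
     "m = rho * int p ^ r" "n = sigma * int p ^ s"
     "real_of_int (n - m) = real_of_int lam * real p powi l * real_of_int (m - 1)"
  shows "n = m^2 \<or> (int p = 2 \<and> (m,n) \<in> {(-2, -8), (2, -2), (4, -2), (4, -8)}) \<or> (int p = 3 \<and> (m,n) = (3,-3))"
proof -
  have P2: "int p \<ge> 2" using p prime_ge_2_nat by fastforce
  have dm: "int p dvd m" using h by (simp add: dvd_power)
  have dn: "int p dvd n" using h by (simp add: dvd_power)
  have dnm: "int p dvd n - m" using dn dm by (rule dvd_diff)
  have nm1: "\<not> int p dvd (m - 1)"
  proof
    assume "int p dvd (m - 1)"
    with dm have "int p dvd m - (m - 1)" by (rule dvd_diff)
    with P2 show False by auto
  qed
  obtain k where "n - m = lam * int p ^ k * (m - 1)" using powi_reduce[OF p h(5) dnm nm1 h(8)] by blast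
  from core[OF P2 h(1-7) this] show ?thesis .
qed

theorem lemma4p4:
  fixes p :: nat
  assumes "prime p"
  shows "(\<forall>m n :: nat.
           (\<exists>r s :: nat. \<exists>l :: int. r \<ge> 1 \<and> s \<ge> 1 \<and> m = p ^ r \<and> n = p ^ s \<and>
              real_of_int (int n - int m) = real p powi l * real_of_int (int m - 1))
           \<longleftrightarrow> ((\<exists>r :: nat. r \<ge> 1 \<and> m = p ^ r) \<and> n = m ^ 2))
     \<and> (\<forall>m n :: int.
           (\<exists>r s :: nat. \<exists>l :: int. \<exists>rho sigma lam :: int.
              r \<ge> 1 \<and> s \<ge> 1 \<and> rho \<in> {-1, 1} \<and> sigma \<in> {-1, 1} \<and> lam \<in> {-1, 1} \<and>
              m = rho * int p ^ r \<and> n = sigma * int p ^ s \<and>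
              real_of_int (n - m) = real_of_int lam * real p powi l * real_of_int (m - 1))
           \<longleftrightarrow> (m \<in> {x. \<exists>h :: nat. h \<ge> 1 \<and> (x = int p ^ h \<or> x = - (int p ^ h))} \<and>
                n \<in> {x. \<exists>h :: nat. h \<ge> 1 \<and> (x = int p ^ h \<or> x = - (int p ^ h))} \<and>
                (n = m ^ 2 \<or>
                 (p = 2 \<and> (m, n) \<in> {(-2, -8), (2, -2), (4, -2), (4, -8)}) \<or>
                 (p = 3 \<and> (m, n) = (3, -3)))))"
proof (rule conjI; intro allI iffI)
  fix m n :: nat
  assume "\<exists>r s :: nat. \<exists>l :: int. r \<ge> 1 \<and> s \<ge> 1 \<and> m = p ^ r \<and> n = p ^ s \<and>
              real_of_int (int n - int m) = real p powi l * real_of_int (int m - 1)"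
  then obtain r s l where h: "r \<ge> 1" "s \<ge> 1" "m = p ^ r" "n = p ^ s"
    "real_of_int (int n - int m) = real p powi l * real_of_int (int m - 1)" by blast
  have "int n = (int m)^2 \<or> (int p = 2 \<and> (int m, int n) \<in> {(-2, -8), (2, -2), (4, -2), (4, -8)}) \<or> (int p = 3 \<and> (int m, int n) = (3,-3))"
    using fwd[OF assms h(1,2), where rho=1 and sigma=1 and lam=1 and l=l and m="int m" and n="int n"] h by simp
  then have "int n = (int m)^2" by auto
  then have "n = m^2" by (metis of_nat_eq_iff of_nat_power)
  with h show "(\<exists>r :: nat. r \<ge> 1 \<and> m = p ^ r) \<and> n = m ^ 2" by blast
next
  fix m n :: nat
  assume "(\<exists>r :: nat. r \<ge> 1 \<and> m = p ^ r) \<and> n = m ^ 2"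
  then obtain r where h: "r \<ge> 1" "m = p ^ r" "n = m^2" by blast
  have "real_of_int (int n - int m) = real p powi (int r) * real_of_int (int m - 1)"
    using h by (simp add: power2_eq_square algebra_simps)
  moreover have "n = p ^ (2*r)" using h by (simp add: power_mult mult.commute)
  ultimately show "\<exists>r s :: nat. \<exists>l :: int. r \<ge> 1 \<and> s \<ge> 1 \<and> m = p ^ r \<and> n = p ^ s \<and>
              real_of_int (int n - int m) = real p powi l * real_of_int (int m - 1)"
    using h by (intro exI[of _ r] exI[of _ "2*r"] exI[of _ "int r"]) simp
next
  fix m n :: int
  assume "\<exists>r s :: nat. \<exists>l :: int. \<exists>rho sigma lam :: int.
              r \<ge> 1 \<and> s \<ge> 1 \<and> rho \<in> {-1, 1} \<and> sigma \<in> {-1, 1} \<and> lam \<in> {-1, 1} \<and>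
              m = rho * int p ^ r \<and> n = sigma * int p ^ s \<and>
              real_of_int (n - m) = real_of_int lam * real p powi l * real_of_int (m - 1)"
  then obtain r s l rho sigma lam where h: "r \<ge> 1" "s \<ge> 1" "rho \<in> {-1, 1}" "sigma \<in> {-1, 1}" "lam \<in> {-1, 1}"
     "m = rho * int p ^ r" "n = sigma * int p ^ s"
     "real_of_int (n - m) = real_of_int lam * real p powi l * real_of_int (m - 1)" by blast
  from fwd[OF assms h] have c: "n = m^2 \<or> (p = 2 \<and> (m,n) \<in> {(-2, -8), (2, -2), (4, -2), (4, -8)}) \<or> (p = 3 \<and> (m,n) = (3,-3))"
    by linarith
  have "m \<in> {x. \<exists>h :: nat. h \<ge> 1 \<and> (x = int p ^ h \<or> x = - (int p ^ h))}" using h by auto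
  moreover have "n \<in> {x. \<exists>h :: nat. h \<ge> 1 \<and> (x = int p ^ h \<or> x = - (int p ^ h))}" using h by auto
  ultimately show "m \<in> {x. \<exists>h :: nat. h \<ge> 1 \<and> (x = int p ^ h \<or> x = - (int p ^ h))} \<and>
                n \<in> {x. \<exists>h :: nat. h \<ge> 1 \<and> (x = int p ^ h \<or> x = - (int p ^ h))} \<and>
                (n = m ^ 2 \<or>
                 (p = 2 \<and> (m, n) \<in> {(-2, -8), (2, -2), (4, -2), (4, -8)}) \<or>
                 (p = 3 \<and> (m, n) = (3, -3)))" using c by blast
next
  fix m n :: int
  let ?Q = "\<exists>r s :: nat. \<exists>l :: int. \<exists>rho sigma lam :: int.
              r \<ge> 1 \<and> s \<ge> 1 \<and> rho \<in> {-1, 1} \<and> sigma \<in> {-1, 1} \<and> lam \<in> {-1, 1} \<and>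
              m = rho * int p ^ r \<and> n = sigma * int p ^ s \<and>
              real_of_int (n - m) = real_of_int lam * real p powi l * real_of_int (m - 1)"
  assume a: "m \<in> {x. \<exists>h :: nat. h \<ge> 1 \<and> (x = int p ^ h \<or> x = - (int p ^ h))} \<and>
                n \<in> {x. \<exists>h :: nat. h \<ge> 1 \<and> (x = int p ^ h \<or> x = - (int p ^ h))} \<and>
                (n = m ^ 2 \<or>
                 (p = 2 \<and> (m, n) \<in> {(-2, -8), (2, -2), (4, -2), (4, -8)}) \<or>
                 (p = 3 \<and> (m, n) = (3, -3)))"
  then obtain h where hh: "h \<ge> 1" "m = int p ^ h \<or> m = - (int p ^ h)" by blast
  from a have "n = m ^ 2 \<or> (p = 2 \<and> (m, n) \<in> {(-2, -8), (2, -2), (4, -2), (4, -8)}) \<or> (p = 3 \<and> (m, n) = (3, -3))" by blast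
  then show ?Q
  proof (elim disjE conjE)
    assume n: "n = m^2"
    have n2: "n = 1 * int p ^ (2*h)" using n hh by (auto simp: power_mult mult.commute)
    from hh(2) show ?Q
    proof
      assume m: "m = int p ^ h"
      have "real_of_int (n - m) = real_of_int 1 * real p powi (int h) * real_of_int (m - 1)"
        using m n by (simp add: power2_eq_square algebra_simps)
      then show ?Q using hh(1) m n2
        by (intro exI[of _ h] exI[of _ "2*h"] exI[of _ "int h"] exI[of _ 1]) auto
    next
      assume m: "m = - (int p ^ h)"
      have "real_of_int (n - m) = real_of_int (-1) * real p powi (int h) * real_of_int (m - 1)"
        using m n by (simp add: power2_eq_square algebra_simps)
      moreover have "m = (-1) * int p ^ h" using m by simp
      ultimately show ?Q using hh(1) n2
        by (intro exI[of _ h] exI[of _ "2*h"] exI[of _ "int h"] exI[of _ "-1"] exI[of _ 1] exI[of _ "-1"]) auto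
    qed
  next
    assume p: "p = 2" and mn: "(m, n) \<in> {(-2, -8), (2, -2), (4, -2), (4, -8)}"
    from mn show ?Q
    proof (elim insertE emptyE)
      assume "(m, n) = (-2, -8)"
      then show ?Q using p
        by (intro exI[of _ 1] exI[of _ 3] exI[of _ 1] exI[of _ "-1"] exI[of _ "-1"] exI[of _ 1]) auto
    next
      assume "(m, n) = (2, -2)"
      then show ?Q using p
        by (intro exI[of _ 1] exI[of _ 1] exI[of _ 2] exI[of _ 1] exI[of _ "-1"] exI[of _ "-1"]) auto
    next
      assume "(m, n) = (4, -2)"
      then show ?Q using p
        by (intro exI[of _ 2] exI[of _ 1] exI[of _ 1] exI[of _ 1] exI[of _ "-1"] exI[of _ "-1"]) auto
    next
      assume "(m, n) = (4, -8)"
      then show ?Q using p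
        by (intro exI[of _ 2] exI[of _ 3] exI[of _ 2] exI[of _ 1] exI[of _ "-1"] exI[of _ "-1"]) auto
    qed
  next
    assume p: "p = 3" and "(m, n) = (3, -3)"
    then show ?Q
      by (intro exI[of _ 1] exI[of _ 1] exI[of _ 1] exI[of _ 1] exI[of _ "-1"] exI[of _ "-1"]) auto
  qed
qed

end
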